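(* Let $\phi\ge 0$, $\sigma>0$ with $\sigma\neq 1$, $\rho>0$, $m>0$ be constants with $\rho+m(\sigma-1)(\phi+1)>0$. Let $c(t)>0$, $s(t)>0$, $p(t)$, $t\ge 0$, satisfy $$p=c^{-\sigma}s^{\phi(1-\sigma)},\qquad \dot s=ms-c,\qquad \dot p=\Big(\rho-m-\phi\frac{c}{s}\Big)p ,$$ with $c(0)=c_0$, $s(0)=s_0$, together with the transversality condition $\lim_{t\to\infty}e^{-\rho t}p(t)s(t)=0$. Then necessarily $$\frac{c_0}{s_0}\,\sigma(\phi+1)=\rho+m(\sigma-1)(\phi+1),$$ and $$s(t)=s_0e^{\frac{m(\phi+1)-\rho}{\sigma(\phi+1)}t},\quad c(t)=c_0e^{\frac{m(\phi+1)-\rho}{\sigma(\phi+1)}t},\quad p(t)=c_0^{-\sigma}s_0^{\phi(1-\sigma)}e^{(\rho-m-\phi\frac{c_0}{s_0})t}.$$ In particular $s$ and $c$ grow at the common constant rate $\frac{m(\phi+1)-\rho}{\sigma(\phi+1)}$ and $p$ at the constant rate $\rho-m-\phi\frac{c_0}{s_0}$.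
   Context: This system is the set of first-order optimality conditions for the optimal growth problem with environmental asset: maximize $\int_0^\infty \frac{(cs^\phi)^{1-\sigma}}{1-\sigma}e^{-\rho t}dt$ subject to $\dot s=ms-c$, with $p$ the costate variable. *)

theory Defs
  imports "HOL-Analysis.Analysis"
begin

end

theory Submission
  imports Defs "HOL-Real_Asymp.Real_Asymp"
begin

theorem mainTheorem3:
  fixes \<phi> \<sigma> \<rho> m c0 s0 :: real
    and c s p :: "real \<Rightarrow> real"
  assumes phi: "\<phi> \<ge> 0"
    and sigma_pos: "\<sigma> > 0" and sigma_ne1: "\<sigma> \<noteq> 1"
    and rho: "\<rho> > 0" and m: "m > 0"
    and growth: "\<rho> + m * (\<sigma> - 1) * (\<phi> + 1) > 0"
    and c_pos: "\<And>t. t \<ge> 0 \<Longrightarrow> c t > 0"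
    and s_pos: "\<And>t. t \<ge> 0 \<Longrightarrow> s t > 0"
    and p_def: "\<And>t. t \<ge> 0 \<Longrightarrow> p t = c t powr (- \<sigma>) * s t powr (\<phi> * (1 - \<sigma>))"
    and s_ode: "\<And>t. t \<ge> 0 \<Longrightarrow> (s has_real_derivative (m * s t - c t)) (at t within {0..})"
    and p_ode: "\<And>t. t \<ge> 0 \<Longrightarrow>
                  (p has_real_derivative ((\<rho> - m - \<phi> * c t / s t) * p t)) (at t within {0..})"
    and c_init: "c 0 = c0" and s_init: "s 0 = s0"
    and transv: "((\<lambda>t. exp (- \<rho> * t) * p t * s t) \<longlongrightarrow> 0) at_top"
  shows "c0 / s0 * \<sigma> * (\<phi> + 1) = \<rho> + m * (\<sigma> - 1) * (\<phi> + 1)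
         \<and> (\<forall>t\<ge>0.
              s t = s0 * exp ((m * (\<phi> + 1) - \<rho>) / (\<sigma> * (\<phi> + 1)) * t)
            \<and> c t = c0 * exp ((m * (\<phi> + 1) - \<rho>) / (\<sigma> * (\<phi> + 1)) * t)
            \<and> p t = c0 powr (- \<sigma>) * s0 powr (\<phi> * (1 - \<sigma>))
                     * exp ((\<rho> - m - \<phi> * c0 / s0) * t))"
proof -
  define a where "a = 1 - \<phi> * (1 - \<sigma>) / \<sigma>"
  define k where "k = (\<rho> + m * (\<sigma> - 1) * (\<phi> + 1)) / \<sigma>"
  define A where "A = (1 + \<phi>) / k"
  define L where "L = (\<lambda>t. a * ln (s t) + ln (p t) / \<sigma>)"
  have kpos: "k > 0" using growth sigma_pos by (simp add: k_def)
  have Apos: "A > 0" using kpos phi by (simp add: A_def)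
  have ppos: "p t > 0" if "t \<ge> 0" for t
    using p_def[OF that] c_pos[OF that] s_pos[OF that] by simp
  have lnp: "ln (p t) = - \<sigma> * ln (c t) + \<phi> * (1 - \<sigma>) * ln (s t)" if "t \<ge> 0" for t
    using p_def[OF that] c_pos[OF that] s_pos[OF that]
    by (simp add: ln_mult ln_powr)
  have L_eq: "L t = ln (s t) - ln (c t)" if "t \<ge> 0" for t
    using lnp[OF that] sigma_pos unfolding L_def a_def by (simp add: field_simps)
  have expL: "exp (L t) = s t / c t" if "t \<ge> 0" for t
    using L_eq[OF that] c_pos[OF that] s_pos[OF that] by (simp add: exp_diff)
  have dL: "(L has_real_derivative (k - (1 + \<phi>) * (c t / s t))) (at t within {0..})"
    if t: "t \<ge> 0" for t
  proof -
    have "(L has_real_derivative (a * (1 / s t * (m * s t - c t)) +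
            1 / p t * ((\<rho> - m - \<phi> * c t / s t) * p t) / \<sigma>)) (at t within {0..})"
    proof -
      have d1: "((\<lambda>t. ln (s t)) has_real_derivative (1 / s t * (m * s t - c t))) (at t within {0..})"
        by (rule DERIV_chain2[OF DERIV_ln_divide[OF s_pos[OF t]] s_ode[OF t]])
      have d2: "((\<lambda>t. ln (p t)) has_real_derivative (1 / p t * ((\<rho> - m - \<phi> * c t / s t) * p t))) (at t within {0..})"
        by (rule DERIV_chain2[OF DERIV_ln_divide[OF ppos[OF t]] p_ode[OF t]])
      show ?thesis unfolding L_def
        by (intro DERIV_add DERIV_cmult d1 DERIV_cdivide d2)
    qed
    moreover have "a * (1 / s t * (m * s t - c t)) +
            1 / p t * ((\<rho> - m - \<phi> * c t / s t) * p t) / \<sigma> = k - (1 + \<phi>) * (c t / s t)"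
      using s_pos[OF t] ppos[OF t] sigma_pos unfolding a_def k_def
      by (simp add: field_simps)
    ultimately show ?thesis by simp
  qed
  define G where "G = (\<lambda>t. (exp (L t) - A) * exp (- k * t))"
  have dG: "(G has_real_derivative 0) (at t within {0..})" if t: "t \<ge> 0" for t
  proof -
    note e1 = DERIV_chain2[OF DERIV_exp dL[OF t]]
    have e2: "((\<lambda>t. exp (- k * t)) has_real_derivative (exp (- k * t) * (- k))) (at t within {0..})"
      by (intro derivative_eq_intros) auto
    have "(G has_real_derivative ((exp (L t) * (k - (1 + \<phi>) * (c t / s t)) - 0) * exp (- k * t)
            + (exp (- k * t) * (- k)) * (exp (L t) - A))) (at t within {0..})"
      unfolding G_def
      by (rule DERIV_mult[OF DERIV_diff[OF e1 DERIV_const] e2])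
    moreover have "(exp (L t) * (k - (1 + \<phi>) * (c t / s t)) - 0) * exp (- k * t)
            + (exp (- k * t) * (- k)) * (exp (L t) - A) = 0"
      using expL[OF t] s_pos[OF t] c_pos[OF t] kpos unfolding A_def
      by (simp add: field_simps)
    ultimately show ?thesis by simp
  qed
  define F where "F = (\<lambda>t. - \<rho> * t + ln (p t) + ln (s t) + k * t - L t)"
  have dF: "(F has_real_derivative 0) (at t within {0..})" if t: "t \<ge> 0" for t
  proof -
    have d1: "((\<lambda>t. ln (s t)) has_real_derivative (1 / s t * (m * s t - c t))) (at t within {0..})"
      by (rule DERIV_chain2[OF DERIV_ln_divide[OF s_pos[OF t]] s_ode[OF t]])
    have d2: "((\<lambda>t. ln (p t)) has_real_derivative (1 / p t * ((\<rho> - m - \<phi> * c t / s t) * p t))) (at t within {0..})"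
      by (rule DERIV_chain2[OF DERIV_ln_divide[OF ppos[OF t]] p_ode[OF t]])
    have d3: "((\<lambda>t. - \<rho> * t) has_real_derivative (- \<rho>)) (at t within {0..})"
      by (intro derivative_eq_intros) auto
    have d4: "((\<lambda>t. k * t) has_real_derivative k) (at t within {0..})"
      by (intro derivative_eq_intros) auto
    have "(F has_real_derivative (- \<rho> + 1 / p t * ((\<rho> - m - \<phi> * c t / s t) * p t)
        + 1 / s t * (m * s t - c t) + k - (k - (1 + \<phi>) * (c t / s t)))) (at t within {0..})"
      unfolding F_def
      by (intro DERIV_diff DERIV_add d1 d2 d3 d4 dL[OF t])
    moreover have "- \<rho> + 1 / p t * ((\<rho> - m - \<phi> * c t / s t) * p t)
        + 1 / s t * (m * s t - c t) + k - (k - (1 + \<phi>) * (c t / s t)) = 0"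
      using s_pos[OF t] ppos[OF t] by (simp add: field_simps)
    ultimately show ?thesis by simp
  qed
  obtain G0 where G0: "\<And>t. t \<ge> 0 \<Longrightarrow> G t = G0"
    using has_field_derivative_zero_constant[of "{0::real..}" G] dG by force
  obtain F0 where F0: "\<And>t. t \<ge> 0 \<Longrightarrow> F t = F0"
    using has_field_derivative_zero_constant[of "{0::real..}" F] dF by force
  have q_eq: "exp (- \<rho> * t) * p t * s t = exp F0 * (A * exp (- k * t) + G0)" if t: "t \<ge> 0" for t
  proof -
    have "exp (L t) = A + G0 * exp (k * t)"
      using G0[OF t] unfolding G_def by (simp add: field_simps exp_minus)
    moreover have "- \<rho> * t + ln (p t) + ln (s t) = F0 - k * t + L t"
      using F0[OF t] unfolding F_def by simp
    hence "exp (- \<rho> * t) * p t * s t = exp F0 * exp (- k * t) * exp (L t)"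
      using ppos[OF t] s_pos[OF t]
      by (metis exp_add exp_ln mult.commute diff_conv_add_uminus mult_minus_left)
    ultimately show ?thesis by (simp add: algebra_simps flip: exp_add)
  qed
  have "((\<lambda>t. exp F0 * (A * exp (- k * t) + G0)) \<longlongrightarrow> exp F0 * (A * 0 + G0)) at_top"
  proof (intro tendsto_intros)
    show "((\<lambda>t. exp (- k * t)) \<longlongrightarrow> 0) at_top" using kpos by real_asymp
  qed
  moreover have "((\<lambda>t. exp F0 * (A * exp (- k * t) + G0)) \<longlongrightarrow> 0) at_top"
  proof -
    have ev: "\<forall>\<^sub>F t in at_top. exp (- \<rho> * t) * p t * s t = exp F0 * (A * exp (- k * t) + G0)"
      using eventually_ge_at_top[of "0::real"] by eventually_elim (rule q_eq)
    show ?thesis using tendsto_cong[OF ev] transv by simp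
  qed
  ultimately have "exp F0 * (A * 0 + G0) = 0" by (rule tendsto_unique[OF trivial_limit_at_top_linorder])
  hence "exp F0 * G0 = 0" by simp
  hence G00: "G0 = 0" by simp
  have y_eq: "s t / c t = A" if t: "t \<ge> 0" for t
    using G0[OF t] G00 expL[OF t] unfolding G_def by simp
  have c_eq: "c t = s t / A" if t: "t \<ge> 0" for t
    using y_eq[OF t] c_pos[OF t] Apos by (simp add: field_simps)
  define g where "g = m - 1 / A"
  define H where "H = (\<lambda>t. ln (s t) - g * t)"
  have dH: "(H has_real_derivative 0) (at t within {0..})" if t: "t \<ge> 0" for t
  proof -
    have "(H has_real_derivative (1 / s t * (m * s t - c t) - g)) (at t within {0..})"
      unfolding H_def
      by (intro derivative_eq_intros DERIV_chain2[OF DERIV_ln_divide[OF s_pos[OF t]] s_ode[OF t]]) (auto intro: s_pos[OF t] s_ode[OF t])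
    moreover have "1 / s t * (m * s t - c t) - g = 0"
      using s_pos[OF t] c_eq[OF t] Apos unfolding g_def by (simp add: field_simps)
    ultimately show ?thesis by simp
  qed
  obtain H0 where H0: "\<And>t. t \<ge> 0 \<Longrightarrow> H t = H0"
    using has_field_derivative_zero_constant[of "{0::real..}" H] dH by force
  have s_eq: "s t = s0 * exp (g * t)" if t: "t \<ge> 0" for t
  proof -
    have "ln (s t) = ln s0 + g * t" using H0[OF t] H0[of 0] s_init unfolding H_def by simp
    hence "exp (ln (s t)) = exp (ln s0) * exp (g * t)" by (simp add: exp_add)
    thus ?thesis using s_pos[OF t] s_pos[of 0] s_init by simp
  qed
  have s0pos: "s0 > 0" using s_pos[of 0] s_init by simp
  have c0eq: "c0 = s0 / A" using c_eq[of 0] c_init s_init by simp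
  have gval: "g = (m * (\<phi> + 1) - \<rho>) / (\<sigma> * (\<phi> + 1))"
  proof -
    have h: "\<sigma> + \<phi> * \<sigma> > 0" using sigma_pos phi by (simp add: add_pos_nonneg)
    have "1 / A = k / (1 + \<phi>)" unfolding A_def using kpos phi by simp
    thus ?thesis unfolding g_def k_def using sigma_pos phi h by (simp add: field_simps)
  qed
  have claim1: "c0 / s0 * \<sigma> * (\<phi> + 1) = \<rho> + m * (\<sigma> - 1) * (\<phi> + 1)"
  proof -
    have "c0 / s0 = k / (1 + \<phi>)" using c0eq s0pos kpos phi unfolding A_def by simp
    hence "c0 / s0 * \<sigma> * (\<phi> + 1) = k / (1 + \<phi>) * (1 + \<phi>) * \<sigma>"
      by (metis mult.commute mult.assoc add.commute)
    moreover have "k / (1 + \<phi>) * (1 + \<phi>) = k" using phi by simp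
    ultimately have "c0 / s0 * \<sigma> * (\<phi> + 1) = k * \<sigma>" by simp
    thus ?thesis unfolding k_def using sigma_pos by simp
  qed
  have rate: "g * (- \<sigma>) + g * (\<phi> * (1 - \<sigma>)) = \<rho> - m - \<phi> * c0 / s0"
  proof -
    define D where "D = \<sigma> * (\<phi> + 1)"
    define x where "x = c0 / s0"
    have Dpos: "D > 0" unfolding D_def using sigma_pos phi by simp
    have gD: "g * D = m * (\<phi> + 1) - \<rho>" unfolding gval D_def using Dpos D_def sigma_pos phi by simp
    have xD: "x * D = \<rho> + m * (\<sigma> - 1) * (\<phi> + 1)" using claim1 unfolding x_def D_def by (simp add: ac_simps)
    have "D * (g * (- \<sigma>) + g * (\<phi> * (1 - \<sigma>))) = (g * D) * (\<phi> - \<sigma> * (\<phi> + 1))"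
      by (simp add: algebra_simps D_def)
    also have "\<dots> = D * (\<rho> - m) - \<phi> * (x * D)" unfolding gD xD by (simp add: D_def algebra_simps)
    also have "\<dots> = D * (\<rho> - m - \<phi> * x)" by (simp add: algebra_simps)
    finally have "g * (- \<sigma>) + g * (\<phi> * (1 - \<sigma>)) = \<rho> - m - \<phi> * x" using Dpos by simp
    thus ?thesis unfolding x_def by simp
  qed
  show ?thesis
  proof (intro conjI allI impI claim1)
    fix t :: real assume t: "t \<ge> 0"
    show "s t = s0 * exp ((m * (\<phi> + 1) - \<rho>) / (\<sigma> * (\<phi> + 1)) * t)"
      using s_eq[OF t] gval by simp
    show "c t = c0 * exp ((m * (\<phi> + 1) - \<rho>) / (\<sigma> * (\<phi> + 1)) * t)"
      using s_eq[OF t] gval c_eq[OF t] c0eq by simp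
    have c0pos: "c0 > 0" using c0eq s0pos Apos by simp
    have "p t = (c0 * exp (g * t)) powr (- \<sigma>) * (s0 * exp (g * t)) powr (\<phi> * (1 - \<sigma>))"
      using p_def[OF t] s_eq[OF t] c_eq[OF t] c0eq by simp
    also have "\<dots> = c0 powr (- \<sigma>) * s0 powr (\<phi> * (1 - \<sigma>))
                     * exp ((g * (- \<sigma>) + g * (\<phi> * (1 - \<sigma>))) * t)"
    proof -
      have "(c0 * exp (g * t)) powr (- \<sigma>) = c0 powr (- \<sigma>) * exp (g * t * (- \<sigma>))"
        using c0pos by (simp add: powr_mult exp_powr_real)
      moreover have "(s0 * exp (g * t)) powr (\<phi> * (1 - \<sigma>)) = s0 powr (\<phi> * (1 - \<sigma>)) * exp (g * t * (\<phi> * (1 - \<sigma>)))"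
        using s0pos by (simp add: powr_mult exp_powr_real)
      moreover have "exp (g * t * (- \<sigma>)) * exp (g * t * (\<phi> * (1 - \<sigma>))) = exp ((g * (- \<sigma>) + g * (\<phi> * (1 - \<sigma>))) * t)"
        by (simp add: algebra_simps flip: exp_add)
      ultimately show ?thesis by (simp add: ac_simps)
    qed
    finally show "p t = c0 powr (- \<sigma>) * s0 powr (\<phi> * (1 - \<sigma>))
                     * exp ((\<rho> - m - \<phi> * c0 / s0) * t)"
      using rate by simp
  qed
qed

end
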